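(* Let $t\ge 2$ be an integer and let $G_t$ be the graph defined below. Then every binomial in $\mathcal{G}=\mathcal{G}_1\cup\mathcal{G}_2\cup\mathcal{G}_3$ is primitive, $I_{G_t}$ is generated by $\mathcal{G}$, and $\mathcal{G}$ is a universal Gröbner basis of $I_{G_t}$, where $\mathcal{G}_1=\{a_ib_j-a_jb_i : 1\le i<j\le t\}$, $\mathcal{G}_2=\{a_ia_jf_1f_3e_2-f_2e_1e_3b_ib_j : 1\le i<j\le t\}$, $\mathcal{G}_3=\{a_i^2f_1f_3e_2-f_2e_1e_3b_i^2 : 1\le i\le t\}$.
   Context: $\mathbb{K}$ is an algebraically closed field of characteristic zero. For $t\ge2$, $G_t$ is the graph with vertex set $\{x_1,x_2,y_1,\dots,y_t,z_1,z_2,w_1,w_2\}$ and edges $a_i=\{x_1,y_i\}$, $b_i=\{x_2,y_i\}$ ($1\le i\le t$), $e_1=\{x_1,z_1\}$, $e_2=\{z_1,z_2\}$, $e_3=\{z_2,x_1\}$, $f_1=\{x_2,w_1\}$, $f_2=\{w_1,w_2\}$, $f_3=\{w_2,x_2\}$ (i.e. $K_{2,t}$ with a triangle attached at each of the two vertices of degree $t$). Its toric ideal $I_{G_t}$ is the kernel of the $\mathbb{K}$-algebra map from $\mathbb{K}[E_t]=\mathbb{K}[a_1,\dots,a_t,f_1,f_2,f_3,e_1,e_2,e_3,b_1,\dots,b_t]$ to the polynomial ring on the vertices sending each edge variable to the product of its two endpoints. A binomial $u_1-u_2\in I_{G_t}$ is primitive if there is no binomial $g_1-g_2\in I_{G_t}$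 (other than itself) with $g_1\mid u_1$ and $g_2\mid u_2$. A universal Gröbner basis is a set that is a Gröbner basis with respect to every monomial order. *)

theory Defs
  imports "HOL-Library.Poly_Mapping" "HOL-Computational_Algebra.Polynomial"
begin

(* Edge variables of K[E_t]: A i = a_i, B i = b_i, E k = e_k, F k = f_k *)
datatype edge = A nat | B nat | E nat | F nat

(* Vertices: VX k = x_k, VY i = y_i, VZ k = z_k, VW k = w_k *)
datatype vertex = VX nat | VY nat | VZ nat | VW nat

type_synonym emono = "edge \<Rightarrow>\<^sub>0 nat"
type_synonym vmono = "vertex \<Rightarrow>\<^sub>0 nat"
type_synonym 'k epoly = "emono \<Rightarrow>\<^sub>0 'k"
type_synonym 'k vpoly = "vmono \<Rightarrow>\<^sub>0 'k"

definition Et :: "nat \<Rightarrow> edge set" where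
  "Et t = {A i | i. 1 \<le> i \<and> i \<le> t} \<union> {B i | i. 1 \<le> i \<and> i \<le> t}
          \<union> {E 1, E 2, E 3, F 1, F 2, F 3}"

(* endpoints of each edge (only meaningful on E_t) *)
fun endpts :: "edge \<Rightarrow> vertex \<times> vertex" where
  "endpts (A i) = (VX 1, VY i)"
| "endpts (B i) = (VX 2, VY i)"
| "endpts (E k) = (if k = 1 then (VX 1, VZ 1) else if k = 2 then (VZ 1, VZ 2) else (VZ 2, VX 1))"
| "endpts (F k) = (if k = 1 then (VX 2, VW 1) else if k = 2 then (VW 1, VW 2) else (VW 2, VX 2))"

(* image of an edge monomial: each edge variable goes to the product of its endpoints *)
definition vimg :: "emono \<Rightarrow> vmono" where
  "vimg m = (\<Sum>e\<in>Poly_Mapping.keys m. Poly_Mapping.single (fst (endpts e)) (Poly_Mapping.lookup m e)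
                        + Poly_Mapping.single (snd (endpts e)) (Poly_Mapping.lookup m e))"

definition toric_map :: "'k::comm_ring_1 epoly \<Rightarrow> 'k vpoly" where
  "toric_map p = (\<Sum>m\<in>Poly_Mapping.keys p. Poly_Mapping.single (vimg m) (Poly_Mapping.lookup p m))"

(* the polynomial ring K[E_t] inside the polynomials over all edge symbols *)
definition PR :: "nat \<Rightarrow> 'k::comm_ring_1 epoly set" where
  "PR t = {p. \<forall>m\<in>Poly_Mapping.keys p. Poly_Mapping.keys m \<subseteq> Et t}"

definition toric_ideal :: "nat \<Rightarrow> 'k::comm_ring_1 epoly set" where
  "toric_ideal t = {p \<in> PR t. toric_map p = 0}"

definition ideal_gen :: "'k::comm_ring_1 epoly set \<Rightarrow> 'k epoly set \<Rightarrow> 'k epoly set" where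
  "ideal_gen R S = {p. \<exists>Fs c. finite Fs \<and> Fs \<subseteq> S \<and> (\<forall>g\<in>Fs. c g \<in> R) \<and> p = (\<Sum>g\<in>Fs. c g * g)}"

definition mv :: "edge \<Rightarrow> emono" where
  "mv x = Poly_Mapping.single x 1"

definition binom :: "emono \<Rightarrow> emono \<Rightarrow> 'k::comm_ring_1 epoly" where
  "binom u1 u2 = Poly_Mapping.single u1 1 - Poly_Mapping.single u2 1"

definition mdvd :: "emono \<Rightarrow> emono \<Rightarrow> bool" where
  "mdvd g u \<longleftrightarrow> (\<forall>x. Poly_Mapping.lookup g x \<le> Poly_Mapping.lookup u x)"

definition primitive :: "nat \<Rightarrow> emono \<Rightarrow> emono \<Rightarrow> 'k::comm_ring_1 itself \<Rightarrow> bool" where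
  "primitive t u1 u2 _ \<longleftrightarrow>
     (binom u1 u2 :: 'k epoly) \<in> toric_ideal t \<and>
     \<not> (\<exists>g1 g2. g1 \<noteq> g2 \<and> (binom g1 g2 :: 'k epoly) \<in> toric_ideal t
            \<and> (binom g1 g2 :: 'k epoly) \<noteq> binom u1 u2 \<and> mdvd g1 u1 \<and> mdvd g2 u2)"

definition monomial_order :: "(emono \<Rightarrow> emono \<Rightarrow> bool) \<Rightarrow> bool" where
  "monomial_order le \<longleftrightarrow>
     (\<forall>x. le x x) \<and> (\<forall>x y. le x y \<and> le y x \<longrightarrow> x = y) \<and>
     (\<forall>x y z. le x y \<and> le y z \<longrightarrow> le x z) \<and> (\<forall>x y. le x y \<or> le y x) \<and>
     (\<forall>x y z. le x y \<longrightarrow> le (x + z) (y + z)) \<and>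
     wf {(x, y). le x y \<and> x \<noteq> y}"

definition lead_mono :: "(emono \<Rightarrow> emono \<Rightarrow> bool) \<Rightarrow> 'k::zero epoly \<Rightarrow> emono" where
  "lead_mono le p = (THE m. m \<in> Poly_Mapping.keys p \<and> (\<forall>m'\<in>Poly_Mapping.keys p. le m' m))"

definition groebner_basis :: "(emono \<Rightarrow> emono \<Rightarrow> bool) \<Rightarrow> 'k::comm_ring_1 epoly set \<Rightarrow> 'k epoly set \<Rightarrow> bool" where
  "groebner_basis le G I \<longleftrightarrow> G \<subseteq> I \<and>
     (\<forall>f\<in>I. f \<noteq> 0 \<longrightarrow> (\<exists>g\<in>G. g \<noteq> 0 \<and> mdvd (lead_mono le g) (lead_mono le f)))"

definition universal_groebner_basis :: "'k::comm_ring_1 epoly set \<Rightarrow> 'k epoly set \<Rightarrow> bool" where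
  "universal_groebner_basis G I \<longleftrightarrow> (\<forall>le. monomial_order le \<longrightarrow> groebner_basis le G I)"

(* the three families, as pairs (u1, u2) representing u1 - u2 *)
definition G1 :: "nat \<Rightarrow> (emono \<times> emono) set" where
  "G1 t = {(mv (A i) + mv (B j), mv (A j) + mv (B i)) | i j. 1 \<le> i \<and> i < j \<and> j \<le> t}"

definition G2 :: "nat \<Rightarrow> (emono \<times> emono) set" where
  "G2 t = {(mv (A i) + mv (A j) + mv (F 1) + mv (F 3) + mv (E 2),
            mv (F 2) + mv (E 1) + mv (E 3) + mv (B i) + mv (B j)) | i j. 1 \<le> i \<and> i < j \<and> j \<le> t}"

definition G3 :: "nat \<Rightarrow> (emono \<times> emono) set" where
  "G3 t = {(mv (A i) + mv (A i) + mv (F 1) + mv (F 3) + mv (E 2),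
            mv (F 2) + mv (E 1) + mv (E 3) + mv (B i) + mv (B i)) | i. 1 \<le> i \<and> i \<le> t}"

definition Gpairs :: "nat \<Rightarrow> (emono \<times> emono) set" where
  "Gpairs t = G1 t \<union> G2 t \<union> G3 t"

definition Gset :: "nat \<Rightarrow> 'k::comm_ring_1 epoly set" where
  "Gset t = (\<lambda>(u1, u2). binom u1 u2) ` Gpairs t"

end

theory Submission
  imports Defs
begin


abbreviation (input) lk :: "('a \<Rightarrow>\<^sub>0 'b::zero) \<Rightarrow> 'a \<Rightarrow> 'b" where "lk \<equiv> Poly_Mapping.lookup"
abbreviation (input) ky :: "('a \<Rightarrow>\<^sub>0 'b::zero) \<Rightarrow> 'a set" where "ky \<equiv> Poly_Mapping.keys"
abbreviation (input) sg :: "'a \<Rightarrow> 'b \<Rightarrow> ('a \<Rightarrow>\<^sub>0 'b::zero)" where "sg \<equiv> Poly_Mapping.single"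

lemma lk_minus_nat: "lk (f - g) k = lk f k - lk (g::emono) k"
  by (rule Poly_Mapping.lookup_minus)

lemma lk_single: "lk (sg k v) k' = (if k = k' then v else 0)"
  by (simp add: Poly_Mapping.lookup_single)

lemma lk_mv: "lk (mv a) x = (if a = x then 1 else 0)"
  by (simp add: mv_def lk_single)

lemma keys_mv[simp]: "ky (mv a) = {a}"
  by (simp add: mv_def)

lemma sum_superset_single:
  assumes "finite S" "ky p \<subseteq> S"
  shows "(\<Sum>m\<in>ky p. sg (f m) (lk p m)) = (\<Sum>m\<in>S. sg (f m) (lk p m))"
  by (rule sum.mono_neutral_left) (use assms in \<open>auto simp: in_keys_iff\<close>)

lemma T_superset:
  assumes "finite S" "ky p \<subseteq> S"
  shows "toric_map p = (\<Sum>m\<in>S. sg (vimg m) (lk p m))"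
  unfolding toric_map_def using sum_superset_single[OF assms] .

lemma T_add: "toric_map (p + q) = toric_map p + toric_map (q :: 'k::comm_ring_1 epoly)"
proof -
  let ?S = "ky p \<union> ky q"
  have "toric_map (p+q) = (\<Sum>m\<in>?S. sg (vimg m) (lk (p+q) m))"
    by (rule T_superset) (use keys_add[of p q] in auto)
  also have "\<dots> = (\<Sum>m\<in>?S. sg (vimg m) (lk p m)) + (\<Sum>m\<in>?S. sg (vimg m) (lk q m))"
    by (simp add: Poly_Mapping.lookup_add Poly_Mapping.single_add sum.distrib)
  also have "\<dots> = toric_map p + toric_map q"
    using T_superset[of ?S p] T_superset[of ?S q] by simp
  finally show ?thesis .
qed

lemma T_diff: "toric_map (p - q) = toric_map p - toric_map (q :: 'k::comm_ring_1 epoly)"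
proof -
  let ?S = "ky p \<union> ky q"
  have "ky (p - q) \<subseteq> ?S" by (auto simp: in_keys_iff Poly_Mapping.lookup_minus)
  then have "toric_map (p-q) = (\<Sum>m\<in>?S. sg (vimg m) (lk (p-q) m))"
    by (intro T_superset) auto
  also have "\<dots> = (\<Sum>m\<in>?S. sg (vimg m) (lk p m)) - (\<Sum>m\<in>?S. sg (vimg m) (lk q m))"
    by (simp add: Poly_Mapping.lookup_minus Poly_Mapping.single_diff sum_subtractf)
  also have "\<dots> = toric_map p - toric_map q"
    using T_superset[of ?S p] T_superset[of ?S q] by simp
  finally show ?thesis .
qed

lemma T_zero[simp]: "toric_map 0 = 0"
  by (simp add: toric_map_def)

lemma T_single: "toric_map (sg m c) = sg (vimg m) (c::'k::comm_ring_1)"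
  by (subst T_superset[of "{m}"]) (auto simp: lk_single)

lemma T_sum: "finite X \<Longrightarrow> toric_map (\<Sum>x\<in>X. P x) = (\<Sum>x\<in>X. toric_map (P x :: 'k::comm_ring_1 epoly))"
  by (induction X rule: finite_induct) (auto simp: T_add)

lemma T_lookup: "lk (toric_map p) w = (\<Sum>m\<in>ky p. if vimg m = w then lk p m else 0)"
  unfolding toric_map_def by (simp add: Poly_Mapping.lookup_sum lk_single eq_commute)

lemma V_superset:
  assumes "finite S" "ky m \<subseteq> S"
  shows "vimg m = (\<Sum>e\<in>S. sg (fst (endpts e)) (lk m e) + sg (snd (endpts e)) (lk m e))"
  unfolding vimg_def by (rule sum.mono_neutral_left) (use assms in \<open>auto simp: in_keys_iff\<close>)

lemma V_add: "vimg (a + b) = vimg a + vimg b"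
proof -
  let ?S = "ky a \<union> ky b"
  have "vimg (a+b) = (\<Sum>e\<in>?S. sg (fst (endpts e)) (lk (a+b) e) + sg (snd (endpts e)) (lk (a+b) e))"
    by (rule V_superset) (use keys_add[of a b] in auto)
  also have "\<dots> = (\<Sum>e\<in>?S. sg (fst (endpts e)) (lk a e) + sg (snd (endpts e)) (lk a e))
     + (\<Sum>e\<in>?S. sg (fst (endpts e)) (lk b e) + sg (snd (endpts e)) (lk b e))"
    by (simp add: Poly_Mapping.lookup_add Poly_Mapping.single_add sum.distrib[symmetric] ac_simps)
  also have "\<dots> = vimg a + vimg b"
    using V_superset[of ?S a] V_superset[of ?S b] by simp
  finally show ?thesis .
qed

lemma V_zero[simp]: "vimg 0 = 0" by (simp add: vimg_def)

lemma V_mv: "vimg (mv e) = sg (fst (endpts e)) 1 + sg (snd (endpts e)) 1"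
  by (simp add: vimg_def mv_def)

definition inc :: "edge \<Rightarrow> vertex \<Rightarrow> nat" where
  "inc e w = (if fst (endpts e) = w then 1 else 0) + (if snd (endpts e) = w then 1 else 0)"

lemma V_lookup:
  assumes "finite S" "ky m \<subseteq> S"
  shows "lk (vimg m) w = (\<Sum>e\<in>S. lk m e * inc e w)"
  by (subst V_superset[OF assms]) (auto simp: Poly_Mapping.lookup_sum Poly_Mapping.lookup_add lk_single inc_def algebra_simps intro!: sum.cong)

lemma Et_eq: "Et t = A ` {1..t} \<union> B ` {1..t} \<union> {E 1, E 2, E 3, F 1, F 2, F 3}"
  unfolding Et_def by auto

lemma finite_Et[simp]: "finite (Et t)" by (simp add: Et_eq)

lemma V_lookup_Et:
  assumes "ky m \<subseteq> Et t"
  shows "lk (vimg m) w = (\<Sum>i=1..t. lk m (A i) * inc (A i) w) + (\<Sum>i=1..t. lk m (B i) * inc (B i) w)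
     + lk m (E 1) * inc (E 1) w + lk m (E 2) * inc (E 2) w + lk m (E 3) * inc (E 3) w
     + lk m (F 1) * inc (F 1) w + lk m (F 2) * inc (F 2) w + lk m (F 3) * inc (F 3) w"
proof -
  have "lk (vimg m) w = (\<Sum>e\<in>Et t. lk m e * inc e w)" using V_lookup[OF finite_Et assms] .
  also have "\<dots> = (\<Sum>e\<in>A ` {1..t}. lk m e * inc e w) + (\<Sum>e\<in>B ` {1..t}. lk m e * inc e w)
     + (\<Sum>e\<in>{E 1, E 2, E 3, F 1, F 2, F 3}. lk m e * inc e w)"
    unfolding Et_eq by (subst sum.union_disjoint; (subst sum.union_disjoint)?; auto)
  also have "\<dots> = (\<Sum>i=1..t. lk m (A i) * inc (A i) w) + (\<Sum>i=1..t. lk m (B i) * inc (B i) w)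
     + lk m (E 1) * inc (E 1) w + lk m (E 2) * inc (E 2) w + lk m (E 3) * inc (E 3) w
     + lk m (F 1) * inc (F 1) w + lk m (F 2) * inc (F 2) w + lk m (F 3) * inc (F 3) w"
    by (simp add: sum.reindex inj_on_def)
  finally show ?thesis .
qed

lemma times_if_01: "(x::nat) * (if P then 1 else 0) = (if P then x else 0)" by simp

lemma inc_simps:
  "inc (A i) w = (if w = VX 1 then 1 else 0) + (if w = VY i then 1 else 0)"
  "inc (B i) w = (if w = VX 2 then 1 else 0) + (if w = VY i then 1 else 0)"
  "inc (E 1) w = (if w = VX 1 then 1 else 0) + (if w = VZ 1 then 1 else 0)"
  "inc (E 2) w = (if w = VZ 1 then 1 else 0) + (if w = VZ 2 then 1 else 0)"
  "inc (E 3) w = (if w = VZ 2 then 1 else 0) + (if w = VX 1 then 1 else 0)"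
  "inc (F 1) w = (if w = VX 2 then 1 else 0) + (if w = VW 1 then 1 else 0)"
  "inc (F 2) w = (if w = VW 1 then 1 else 0) + (if w = VW 2 then 1 else 0)"
  "inc (F 3) w = (if w = VW 2 then 1 else 0) + (if w = VX 2 then 1 else 0)"
  by (auto simp: inc_def)

lemma V_VZ1: "ky m \<subseteq> Et t \<Longrightarrow> lk (vimg m) (VZ 1) = lk m (E 1) + lk m (E 2)"
  by (simp add: V_lookup_Et inc_def times_if_01 sum.delta)
lemma V_VZ2: "ky m \<subseteq> Et t \<Longrightarrow> lk (vimg m) (VZ 2) = lk m (E 2) + lk m (E 3)"
  by (simp add: V_lookup_Et inc_def times_if_01 sum.delta)
lemma V_VW1: "ky m \<subseteq> Et t \<Longrightarrow> lk (vimg m) (VW 1) = lk m (F 1) + lk m (F 2)"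
  by (simp add: V_lookup_Et inc_def times_if_01 sum.delta)
lemma V_VW2: "ky m \<subseteq> Et t \<Longrightarrow> lk (vimg m) (VW 2) = lk m (F 2) + lk m (F 3)"
  by (simp add: V_lookup_Et inc_def times_if_01 sum.delta)
lemma V_VX1: "ky m \<subseteq> Et t \<Longrightarrow> lk (vimg m) (VX 1) = (\<Sum>i=1..t. lk m (A i)) + lk m (E 1) + lk m (E 3)"
  by (simp add: V_lookup_Et inc_def times_if_01 sum.delta)
lemma V_VX2: "ky m \<subseteq> Et t \<Longrightarrow> lk (vimg m) (VX 2) = (\<Sum>i=1..t. lk m (B i)) + lk m (F 1) + lk m (F 3)"
  by (simp add: V_lookup_Et inc_def times_if_01 sum.delta)
lemma V_VY: "ky m \<subseteq> Et t \<Longrightarrow> 1 \<le> j \<Longrightarrow> j \<le> t \<Longrightarrow> lk (vimg m) (VY j) = lk m (A j) + lk m (B j)"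
  by (simp add: V_lookup_Et inc_def times_if_01 sum.delta)


definition mdeg :: "emono \<Rightarrow> nat" where "mdeg m = (\<Sum>x\<in>ky m. lk m x)"

lemma mdeg_superset: "finite S \<Longrightarrow> ky m \<subseteq> S \<Longrightarrow> mdeg m = (\<Sum>x\<in>S. lk m x)"
  unfolding mdeg_def by (rule sum.mono_neutral_left) (auto simp: in_keys_iff)

lemma mdeg_add: "mdeg (a + b) = mdeg a + mdeg b"
proof -
  let ?S = "ky a \<union> ky b"
  have "mdeg (a+b) = (\<Sum>x\<in>?S. lk (a+b) x)" by (rule mdeg_superset) (use keys_add[of a b] in auto)
  also have "\<dots> = (\<Sum>x\<in>?S. lk a x) + (\<Sum>x\<in>?S. lk b x)" by (simp add: Poly_Mapping.lookup_add sum.distrib)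
  also have "\<dots> = mdeg a + mdeg b" using mdeg_superset[of ?S a] mdeg_superset[of ?S b] by simp
  finally show ?thesis .
qed

lemma mdeg_mv[simp]: "mdeg (mv e) = 1" by (simp add: mdeg_def mv_def)

lemma mdvd_keys: "mdvd g u \<Longrightarrow> ky g \<subseteq> ky u"
proof
  fix x assume "mdvd g u" "x \<in> ky g"
  then have "lk g x \<le> lk u x" "lk g x \<noteq> 0" by (auto simp: mdvd_def in_keys_iff)
  then show "x \<in> ky u" by (simp add: in_keys_iff)
qed

lemma mdvd_decomp: "mdvd g u \<Longrightarrow> u = g + (u - g)"
  unfolding mdvd_def by (intro poly_mapping_eqI) (simp add: Poly_Mapping.lookup_add lk_minus_nat)

lemma mdvd_trans: "mdvd a b \<Longrightarrow> mdvd b c \<Longrightarrow> mdvd a c"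
  unfolding mdvd_def using le_trans by blast

lemma mdvd_antisym: "mdvd a b \<Longrightarrow> mdvd b a \<Longrightarrow> a = b"
  unfolding mdvd_def by (intro poly_mapping_eqI) (simp add: le_antisym)

lemma mdvd_add_left: "mdvd a (a + b)"
  unfolding mdvd_def by (simp add: Poly_Mapping.lookup_add)

lemma mdvd_eq_deg: assumes "mdvd g u" "mdeg g = mdeg u" shows "g = u"
proof -
  have k: "ky g \<subseteq> ky u" using mdvd_keys[OF assms(1)] .
  have "mdeg u = mdeg g + mdeg (u - g)" using mdvd_decomp[OF assms(1)] mdeg_add by metis
  then have "mdeg (u - g) = 0" using assms(2) by simp
  then have "\<forall>x\<in>ky (u - g). lk (u - g) x = 0" unfolding mdeg_def by simp
  then have "u - g = 0" by (metis in_keys_iff keys_eq_empty equals0I)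
  then show ?thesis using mdvd_decomp[OF assms(1)] by simp
qed

lemma mdvd_deg_le: "mdvd g u \<Longrightarrow> mdeg g \<le> mdeg u"
  using mdvd_decomp mdeg_add by (metis le_add1)

lemma keys_add_sub: "ky a \<subseteq> S \<Longrightarrow> ky b \<subseteq> S \<Longrightarrow> ky (a + b) \<subseteq> S"
  using keys_add[of a b] by blast

definition hA :: "nat \<Rightarrow> nat \<Rightarrow> emono" where
  "hA i j = mv (A i) + mv (A j) + mv (F 1) + mv (F 3) + mv (E 2)"
definition kB :: "nat \<Rightarrow> nat \<Rightarrow> emono" where
  "kB i j = mv (F 2) + mv (E 1) + mv (E 3) + mv (B i) + mv (B j)"
definition h1 :: "nat \<Rightarrow> nat \<Rightarrow> emono" where
  "h1 i j = mv (A i) + mv (B j)"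

lemma Gpairs_cases:
  assumes "(h, k) \<in> Gpairs t"
  shows "(\<exists>i j. 1 \<le> i \<and> i < j \<and> j \<le> t \<and> h = h1 i j \<and> k = h1 j i)
       \<or> (\<exists>i j. 1 \<le> i \<and> i \<le> j \<and> j \<le> t \<and> h = hA i j \<and> k = kB i j)"
proof -
  have "(h,k) \<in> G1 t \<or> (h,k) \<in> G2 t \<or> (h,k) \<in> G3 t" using assms unfolding Gpairs_def by auto
  then show ?thesis
  proof (elim disjE)
    assume "(h,k) \<in> G1 t"
    then obtain i j where "1 \<le> i" "i < j" "j \<le> t" "h = h1 i j" "k = h1 j i"
      unfolding G1_def h1_def by (auto simp: add.commute)
    then show ?thesis by blast
  next
    assume "(h,k) \<in> G2 t"
    then obtain i j where "1 \<le> i" "i < j" "j \<le> t" "h = hA i j" "k = kB i j"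
      unfolding G2_def hA_def kB_def by auto
    then have "1 \<le> i \<and> i \<le> j \<and> j \<le> t \<and> h = hA i j \<and> k = kB i j" by simp
    then show ?thesis by blast
  next
    assume "(h,k) \<in> G3 t"
    then obtain i where "1 \<le> i" "i \<le> t" "h = hA i i" "k = kB i i"
      unfolding G3_def hA_def kB_def by auto
    then show ?thesis by blast
  qed
qed

lemma G1_mem: "1 \<le> i \<Longrightarrow> i < j \<Longrightarrow> j \<le> t \<Longrightarrow> (h1 i j, h1 j i) \<in> Gpairs t"
  unfolding Gpairs_def G1_def h1_def by (auto simp: add.commute)

lemma G23_mem: "1 \<le> i \<Longrightarrow> i \<le> j \<Longrightarrow> j \<le> t \<Longrightarrow> (hA i j, kB i j) \<in> Gpairs t"
proof (cases "i = j")
  case True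
  assume "1 \<le> i" "j \<le> t"
  then show ?thesis using True unfolding Gpairs_def G3_def hA_def kB_def by auto
next
  case False
  assume "1 \<le> i" "i \<le> j" "j \<le> t"
  then have "(hA i j, kB i j) \<in> G2 t" using False unfolding G2_def hA_def kB_def by force
  then show ?thesis unfolding Gpairs_def by auto
qed

lemma hA_comm: "hA i j = hA j i" unfolding hA_def by (simp add: ac_simps)
lemma kB_comm: "kB i j = kB j i" unfolding kB_def by (simp add: ac_simps)

lemma keys_h1: "1 \<le> i \<Longrightarrow> i \<le> t \<Longrightarrow> 1 \<le> j \<Longrightarrow> j \<le> t \<Longrightarrow> ky (h1 i j) \<subseteq> Et t"
  unfolding h1_def by (intro keys_add_sub; auto simp: Et_def)
lemma keys_hA: "1 \<le> i \<Longrightarrow> i \<le> t \<Longrightarrow> 1 \<le> j \<Longrightarrow> j \<le> t \<Longrightarrow> ky (hA i j) \<subseteq> Et t"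
  unfolding hA_def by (intro keys_add_sub; auto simp: Et_def)
lemma keys_kB: "1 \<le> i \<Longrightarrow> i \<le> t \<Longrightarrow> 1 \<le> j \<Longrightarrow> j \<le> t \<Longrightarrow> ky (kB i j) \<subseteq> Et t"
  unfolding kB_def by (intro keys_add_sub; auto simp: Et_def)

lemma Gpairs_props:
  assumes "(h, k) \<in> Gpairs t"
  shows "ky h \<subseteq> Et t \<and> ky k \<subseteq> Et t \<and> vimg h = vimg k \<and> h \<noteq> k \<and> mdeg h \<ge> 1 \<and> mdeg k \<ge> 1"
  using Gpairs_cases[OF assms]
proof (elim disjE exE conjE)
  fix i j assume *: "1 \<le> i" "i < j" "j \<le> t" "h = h1 i j" "k = h1 j i"
  have "lk h (A i) \<noteq> lk k (A i)" using * by (simp add: h1_def Poly_Mapping.lookup_add lk_mv)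
  then have "h \<noteq> k" by auto
  moreover have "vimg h = vimg k" using * by (simp add: h1_def V_add V_mv ac_simps)
  moreover have "ky h \<subseteq> Et t" "ky k \<subseteq> Et t" using * keys_h1 by auto
  moreover have "mdeg h \<ge> 1" "mdeg k \<ge> 1" using * by (simp_all add: h1_def mdeg_add)
  ultimately show ?thesis by blast
next
  fix i j assume *: "1 \<le> i" "i \<le> j" "j \<le> t" "h = hA i j" "k = kB i j"
  have "lk h (E 2) \<noteq> lk k (E 2)" using * by (simp add: hA_def kB_def Poly_Mapping.lookup_add lk_mv)
  then have "h \<noteq> k" by auto
  moreover have "vimg h = vimg k" using * by (simp add: hA_def kB_def V_add V_mv ac_simps)
  moreover have "ky h \<subseteq> Et t" "ky k \<subseteq> Et t" using * keys_hA keys_kB by auto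
  moreover have "mdeg h \<ge> 1" "mdeg k \<ge> 1" using * by (simp_all add: hA_def kB_def mdeg_add)
  ultimately show ?thesis by blast
qed

lemma sum_pos_ex: "finite S \<Longrightarrow> 0 < (\<Sum>i\<in>S. f i :: int) \<Longrightarrow> \<exists>i\<in>S. 0 < f i"
  by (metis not_less sum_nonpos)
lemma sum_neg_ex: "finite S \<Longrightarrow> (\<Sum>i\<in>S. f i :: int) < 0 \<Longrightarrow> \<exists>i\<in>S. f i < 0"
  by (metis not_less sum_nonneg)
lemma sum_le_single: assumes "finite S" "i \<in> S" "\<forall>j\<in>S. j \<noteq> i \<longrightarrow> f j \<le> (0::int)"
  shows "(\<Sum>j\<in>S. f j) \<le> f i"
proof -
  have "(\<Sum>j\<in>S. f j) = f i + (\<Sum>j\<in>S - {i}. f j)" using assms by (simp add: sum.remove)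
  moreover have "(\<Sum>j\<in>S - {i}. f j) \<le> 0" using assms(3) by (intro sum_nonpos) auto
  ultimately show ?thesis by simp
qed
lemma sum_ge_single: assumes "finite S" "i \<in> S" "\<forall>j\<in>S. j \<noteq> i \<longrightarrow> f j \<ge> (0::int)"
  shows "(\<Sum>j\<in>S. f j) \<ge> f i"
proof -
  have "(\<Sum>j\<in>S. f j) = f i + (\<Sum>j\<in>S - {i}. f j)" using assms by (simp add: sum.remove)
  moreover have "(\<Sum>j\<in>S - {i}. f j) \<ge> 0" using assms(3) by (intro sum_nonneg) auto
  ultimately show ?thesis by simp
qed

lemma mdvd_h1: "1 \<le> lk u (A i) \<Longrightarrow> 1 \<le> lk u (B j) \<Longrightarrow> mdvd (h1 i j) u"
  unfolding mdvd_def h1_def by (auto simp: Poly_Mapping.lookup_add lk_mv)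

lemma mdvd_hA: "1 \<le> lk u (A i) \<Longrightarrow> 1 \<le> lk u (A j) \<Longrightarrow> (i = j \<Longrightarrow> 2 \<le> lk u (A i))
   \<Longrightarrow> 1 \<le> lk u (F 1) \<Longrightarrow> 1 \<le> lk u (F 3) \<Longrightarrow> 1 \<le> lk u (E 2) \<Longrightarrow> mdvd (hA i j) u"
  unfolding mdvd_def hA_def by (auto simp: Poly_Mapping.lookup_add lk_mv)

lemma mdvd_kB: "1 \<le> lk u (B i) \<Longrightarrow> 1 \<le> lk u (B j) \<Longrightarrow> (i = j \<Longrightarrow> 2 \<le> lk u (B i))
   \<Longrightarrow> 1 \<le> lk u (F 2) \<Longrightarrow> 1 \<le> lk u (E 1) \<Longrightarrow> 1 \<le> lk u (E 3) \<Longrightarrow> mdvd (kB i j) u"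
  unfolding mdvd_def kB_def by (auto simp: Poly_Mapping.lookup_add lk_mv)

lemma comb0:
  assumes ku: "ky u \<subseteq> Et t" and kv: "ky v \<subseteq> Et t" and eq: "vimg u = vimg v" and ne: "u \<noteq> v"
    and s0: "lk v (E 2) \<le> lk u (E 2)"
  shows "\<exists>h k. ((h,k) \<in> Gpairs t \<or> (k,h) \<in> Gpairs t) \<and> mdvd h u \<and> mdvd k v"
proof -
  define d where "d e = int (lk u e) - int (lk v e)" for e
  define s where "s = d (E 2)"
  have s_nn: "s \<ge> 0" using s0 by (simp add: s_def d_def)
  have z1: "d (E 1) = - s" using V_VZ1[OF ku] V_VZ1[OF kv] eq by (simp add: s_def d_def)
  have z2: "d (E 3) = - s" using V_VZ2[OF ku] V_VZ2[OF kv] eq by (simp add: s_def d_def)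
  have w1: "d (F 1) = - d (F 2)" using V_VW1[OF ku] V_VW1[OF kv] eq by (simp add: d_def)
  have w2: "d (F 3) = - d (F 2)" using V_VW2[OF ku] V_VW2[OF kv] eq by (simp add: d_def)
  have y: "d (B j) = - d (A j)" if "j \<in> {1..t}" for j
    using V_VY[OF ku, of j] V_VY[OF kv, of j] eq that by (simp add: d_def)
  have x1n: "(\<Sum>i=1..t. lk u (A i)) + lk u (E 1) + lk u (E 3) = (\<Sum>i=1..t. lk v (A i)) + lk v (E 1) + lk v (E 3)"
    using V_VX1[OF ku] V_VX1[OF kv] eq by simp
  then have "int (\<Sum>i=1..t. lk u (A i)) + int (lk u (E 1)) + int (lk u (E 3))
       = int (\<Sum>i=1..t. lk v (A i)) + int (lk v (E 1)) + int (lk v (E 3))" by linarith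
  then have "(\<Sum>i=1..t. int (lk u (A i))) - (\<Sum>i=1..t. int (lk v (A i))) + d (E 1) + d (E 3) = 0"
    by (simp add: d_def)
  then have sumA: "(\<Sum>i=1..t. d (A i)) = 2 * s" using z1 z2 by (simp add: d_def sum_subtractf)
  have x2n: "(\<Sum>i=1..t. lk u (B i)) + lk u (F 1) + lk u (F 3) = (\<Sum>i=1..t. lk v (B i)) + lk v (F 1) + lk v (F 3)"
    using V_VX2[OF ku] V_VX2[OF kv] eq by simp
  then have "int (\<Sum>i=1..t. lk u (B i)) + int (lk u (F 1)) + int (lk u (F 3))
       = int (\<Sum>i=1..t. lk v (B i)) + int (lk v (F 1)) + int (lk v (F 3))" by linarith
  then have "(\<Sum>i=1..t. int (lk u (B i))) - (\<Sum>i=1..t. int (lk v (B i))) + d (F 1) + d (F 3) = 0"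
    by (simp add: d_def)
  then have sumB0: "(\<Sum>i=1..t. d (B i)) + d (F 1) + d (F 3) = 0" by (simp add: d_def sum_subtractf)
  have "(\<Sum>i=1..t. d (B i)) = (\<Sum>i=1..t. - d (A i))" using y by (intro sum.cong) auto
  then have sumB: "(\<Sum>i=1..t. d (B i)) = - 2 * s" using sumA by (simp add: sum_negf)
  have f2: "d (F 2) = - s" using sumB0 sumB w1 w2 by simp
  have f1: "d (F 1) = s" and f3: "d (F 3) = s" using f2 w1 w2 by simp_all
  show ?thesis
  proof (cases "s > 0")
    case True
    have e: "1 \<le> lk u (E 2)" "1 \<le> lk v (E 1)" "1 \<le> lk v (E 3)"
      "1 \<le> lk u (F 1)" "1 \<le> lk u (F 3)" "1 \<le> lk v (F 2)"
      using True z1 z2 f1 f2 f3 by (simp_all add: s_def d_def)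
    have "0 < (\<Sum>i=1..t. d (A i))" using sumA True by simp
    then obtain i where i: "i \<in> {1..t}" "0 < d (A i)" using sum_pos_ex[of "{1..t}" "\<lambda>i. d (A i)"] by auto
    show ?thesis
    proof (cases "d (A i) \<ge> 2")
      case True
      have "2 \<le> lk u (A i)" "2 \<le> lk v (B i)" using True y[OF i(1)] by (simp_all add: d_def)
      then have "mdvd (hA i i) u" "mdvd (kB i i) v" using e by (auto intro!: mdvd_hA mdvd_kB)
      moreover have "(hA i i, kB i i) \<in> Gpairs t" using i by (intro G23_mem) auto
      ultimately show ?thesis by blast
    next
      case False
      then have di: "d (A i) = 1" using i by simp
      have "\<exists>j\<in>{1..t}. j \<noteq> i \<and> 0 < d (A j)"
      proof (rule ccontr)
        assume "\<not> ?thesis"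
        then have "(\<Sum>j=1..t. d (A j)) \<le> d (A i)" by (intro sum_le_single i) auto
        then show False using sumA True di by simp
      qed
      then obtain j where j: "j \<in> {1..t}" "j \<noteq> i" "0 < d (A j)" by blast
      have "1 \<le> lk u (A i)" "1 \<le> lk v (B i)" "1 \<le> lk u (A j)" "1 \<le> lk v (B j)"
        using i j y[OF i(1)] y[OF j(1)] by (simp_all add: d_def)
      then have "mdvd (hA i j) u" "mdvd (kB i j) v" using e j(2) by (auto intro!: mdvd_hA mdvd_kB)
      moreover have "(hA i j, kB i j) \<in> Gpairs t"
      proof (cases "i < j")
        case True then show ?thesis using i j by (intro G23_mem) auto
      next
        case False then show ?thesis using i j hA_comm kB_comm G23_mem[of j i t] by auto
      qed
      ultimately show ?thesis by blast
    qed
  next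
    case False
    then have s: "s = 0" using s_nn by simp
    have dz: "d (E k) = 0" "d (F k) = 0" if "k \<in> {1,2,3}" for k
    proof -
      have "d (E 2) = 0" using s s_def by simp
      then show "d (E k) = 0" "d (F k) = 0" using that z1 z2 f1 f2 f3 s by auto
    qed
    have "\<exists>e. lk u e \<noteq> lk v e"
    proof (rule ccontr)
      assume "\<not> ?thesis"
      then have "u = v" by (intro poly_mapping_eqI) auto
      with ne show False by simp
    qed
    then obtain e where "lk u e \<noteq> lk v e" by blast
    then have de: "d e \<noteq> 0" by (simp add: d_def)
    then have "e \<in> ky u \<union> ky v" by (auto simp: d_def in_keys_iff)
    then have "e \<in> Et t" using ku kv by auto
    then have "\<exists>i\<in>{1..t}. d (A i) \<noteq> 0"
    proof (unfold Et_eq, elim UnE imageE)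
      fix i assume "e = A i" "i \<in> {1..t}" then show ?thesis using de by blast
    next
      fix i assume "e = B i" "i \<in> {1..t}" then show ?thesis using de y[of i] by auto
    next
      assume "e \<in> {E 1, E 2, E 3, F 1, F 2, F 3}"
      then show ?thesis using de dz[of 1] dz[of 2] dz[of 3] by auto
    qed
    then obtain i0 where i0: "i0 \<in> {1..t}" "d (A i0) \<noteq> 0" by blast
    have "\<exists>p\<in>{1..t}. 0 < d (A p)"
    proof (cases "0 < d (A i0)")
      case True then show ?thesis using i0 by blast
    next
      case False
      then have "d (A i0) < 0" using i0 by simp
      show ?thesis
      proof (rule ccontr)
        assume "\<not> ?thesis"
        then have "(\<Sum>j=1..t. d (A j)) \<le> d (A i0)" by (intro sum_le_single i0) auto
        then show False using sumA s \<open>d (A i0) < 0\<close> by simp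
      qed
    qed
    then obtain p where p: "p \<in> {1..t}" "0 < d (A p)" by blast
    have "\<exists>q\<in>{1..t}. q \<noteq> p \<and> d (A q) < 0"
    proof (rule ccontr)
      assume "\<not> ?thesis"
      then have "(\<Sum>j=1..t. d (A j)) \<ge> d (A p)" by (intro sum_ge_single p) (auto simp: not_less)
      then show False using sumA s p by simp
    qed
    then obtain q where q: "q \<in> {1..t}" "q \<noteq> p" "d (A q) < 0" by blast
    have "1 \<le> lk u (A p)" "1 \<le> lk v (B p)" "1 \<le> lk v (A q)" "1 \<le> lk u (B q)"
      using p q y[OF p(1)] y[OF q(1)] by (simp_all add: d_def)
    then have "mdvd (h1 p q) u" "mdvd (h1 q p) v" by (auto intro!: mdvd_h1)
    moreover have "(h1 p q, h1 q p) \<in> Gpairs t \<or> (h1 q p, h1 p q) \<in> Gpairs t"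
    proof (cases "p < q")
      case True then show ?thesis using p q by (auto intro!: G1_mem)
    next
      case False then have "q < p" using q by simp
      then show ?thesis using p q by (auto intro!: G1_mem)
    qed
    ultimately show ?thesis by blast
  qed
qed

lemma comb:
  assumes ku: "ky u \<subseteq> Et t" and kv: "ky v \<subseteq> Et t" and eq: "vimg u = vimg v" and ne: "u \<noteq> v"
  shows "\<exists>h k. ((h,k) \<in> Gpairs t \<or> (k,h) \<in> Gpairs t) \<and> mdvd h u \<and> mdvd k v"
proof (cases "lk v (E 2) \<le> lk u (E 2)")
  case True then show ?thesis using comb0[OF assms] by blast
next
  case False
  then have "lk u (E 2) \<le> lk v (E 2)" by simp
  from comb0[OF kv ku eq[symmetric] ne[symmetric] this] show ?thesis by blast
qed


lemma PR_iff: "p \<in> PR t \<longleftrightarrow> (\<forall>m\<in>ky p. ky m \<subseteq> Et t)" by (simp add: PR_def)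

lemma PR_sub: "ky p \<subseteq> ky q \<Longrightarrow> q \<in> PR t \<Longrightarrow> p \<in> PR t" by (auto simp: PR_def)

lemma PR_0: "0 \<in> PR t" by (simp add: PR_def)

lemma PR_add: "p \<in> PR t \<Longrightarrow> q \<in> PR t \<Longrightarrow> p + q \<in> PR t"
  using keys_add[of p q] by (auto simp: PR_def)

lemma PR_uminus: "p \<in> PR t \<Longrightarrow> - (p::'k::comm_ring_1 epoly) \<in> PR t"
  by (auto simp: PR_def in_keys_iff)

lemma PR_diff: "p \<in> PR t \<Longrightarrow> q \<in> PR t \<Longrightarrow> p - (q::'k::comm_ring_1 epoly) \<in> PR t"
  using PR_add[of p t "-q"] PR_uminus[of q t] by simp

lemma PR_mult: "p \<in> PR t \<Longrightarrow> q \<in> PR t \<Longrightarrow> p * (q::'k::comm_ring_1 epoly) \<in> PR t"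
proof -
  assume p: "p \<in> PR t" and q: "q \<in> PR t"
  show ?thesis unfolding PR_iff
  proof
    fix m assume "m \<in> ky (p * q)"
    then obtain a b where "m = a + b" "a \<in> ky p" "b \<in> ky q" using keys_mult[of p q] by blast
    then show "ky m \<subseteq> Et t" using p q keys_add[of a b] unfolding PR_def by blast
  qed
qed

lemma PR_single: "ky m \<subseteq> Et t \<Longrightarrow> sg m c \<in> PR t" by (auto simp: PR_def)

lemma PR_sum: "finite X \<Longrightarrow> (\<forall>x\<in>X. P x \<in> PR t) \<Longrightarrow> (\<Sum>x\<in>X. P x) \<in> PR t"
  by (induction X rule: finite_induct) (auto intro: PR_0 PR_add)

lemma ig_intro: "finite Fs \<Longrightarrow> Fs \<subseteq> S \<Longrightarrow> (\<forall>g\<in>Fs. c g \<in> R) \<Longrightarrow> p = (\<Sum>g\<in>Fs. c g * g) \<Longrightarrow> p \<in> ideal_gen R S"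
  unfolding ideal_gen_def by blast

lemma ig_0: "0 \<in> ideal_gen (PR t) S"
  by (rule ig_intro[of "{}"]) auto

lemma ig_add:
  assumes "p \<in> ideal_gen (PR t) S" "q \<in> ideal_gen (PR t) S"
  shows "p + q \<in> ideal_gen (PR t) (S :: 'k::comm_ring_1 epoly set)"
proof -
  obtain F1 c1 where 1: "finite F1" "F1 \<subseteq> S" "\<forall>g\<in>F1. c1 g \<in> PR t" "p = (\<Sum>g\<in>F1. c1 g * g)"
    using assms(1) unfolding ideal_gen_def by blast
  obtain F2 c2 where 2: "finite F2" "F2 \<subseteq> S" "\<forall>g\<in>F2. c2 g \<in> PR t" "q = (\<Sum>g\<in>F2. c2 g * g)"
    using assms(2) unfolding ideal_gen_def by blast
  define c where "c g = (if g \<in> F1 then c1 g else 0) + (if g \<in> F2 then c2 g else 0)" for g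
  have cg: "c g * g = (if g \<in> F1 then c1 g * g else 0) + (if g \<in> F2 then c2 g * g else 0)" for g
    unfolding c_def by (simp add: distrib_right)
  have "(\<Sum>g\<in>F1 \<union> F2. c g * g) = (\<Sum>g\<in>F1 \<union> F2. if g \<in> F1 then c1 g * g else 0)
        + (\<Sum>g\<in>F1 \<union> F2. if g \<in> F2 then c2 g * g else 0)"
    unfolding cg by (rule sum.distrib)
  also have "\<dots> = p + q"
  proof -
    have a: "(\<Sum>g\<in>F1 \<union> F2. if g \<in> F1 then c1 g * g else 0) = (\<Sum>g\<in>F1. c1 g * g)"
      by (rule sum.mono_neutral_cong_right) (use 1 2 in auto)
    have b: "(\<Sum>g\<in>F1 \<union> F2. if g \<in> F2 then c2 g * g else 0) = (\<Sum>g\<in>F2. c2 g * g)"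
      by (rule sum.mono_neutral_cong_right) (use 1 2 in auto)
    show ?thesis using a b 1 2 by simp
  qed
  finally have "p + q = (\<Sum>g\<in>F1 \<union> F2. c g * g)" by simp
  moreover have "\<forall>g\<in>F1 \<union> F2. c g \<in> PR t" using 1 2 unfolding c_def by (auto intro!: PR_add PR_0)
  ultimately show ?thesis using 1 2 by (intro ig_intro[of "F1 \<union> F2" S c]) auto
qed

lemma ig_mult:
  assumes "r \<in> PR t" "p \<in> ideal_gen (PR t) S"
  shows "r * p \<in> ideal_gen (PR t) (S :: 'k::comm_ring_1 epoly set)"
proof -
  obtain F1 c1 where 1: "finite F1" "F1 \<subseteq> S" "\<forall>g\<in>F1. c1 g \<in> PR t" "p = (\<Sum>g\<in>F1. c1 g * g)"
    using assms(2) unfolding ideal_gen_def by blast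
  have "r * p = (\<Sum>g\<in>F1. (r * c1 g) * g)" using 1 by (simp add: sum_distrib_left mult.assoc)
  moreover have "\<forall>g\<in>F1. r * c1 g \<in> PR t" using 1 assms(1) by (auto intro: PR_mult)
  ultimately show ?thesis using 1 by (intro ig_intro[of F1 S "\<lambda>g. r * c1 g"]) auto
qed

lemma PR_one: "(1 :: 'k::comm_ring_1 epoly) \<in> PR t" by (simp add: PR_def)

lemma ig_uminus: "p \<in> ideal_gen (PR t) S \<Longrightarrow> - p \<in> ideal_gen (PR t) (S :: 'k::comm_ring_1 epoly set)"
proof -
  assume "p \<in> ideal_gen (PR t) S"
  moreover have "(-1 :: 'k epoly) \<in> PR t" using PR_uminus[OF PR_one[where 'k='k]] .
  ultimately have "(-1 :: 'k epoly) * p \<in> ideal_gen (PR t) S" by (intro ig_mult)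
  then show ?thesis by simp
qed

lemma ig_gen: "g \<in> S \<Longrightarrow> S \<subseteq> PR t \<Longrightarrow> g \<in> ideal_gen (PR t) (S :: 'k::comm_ring_1 epoly set)"
  by (rule ig_intro[of "{g}" S "\<lambda>_. 1"]) (auto intro: PR_one)

lemma keys_binom: "h \<noteq> k \<Longrightarrow> ky (binom h k :: 'k::comm_ring_1 epoly) = {h, k}"
  by (auto simp: binom_def in_keys_iff Poly_Mapping.lookup_minus lk_single split: if_splits)

lemma binom_in_I:
  assumes "ky h \<subseteq> Et t" "ky k \<subseteq> Et t" "vimg h = vimg k"
  shows "(binom h k :: 'k::comm_ring_1 epoly) \<in> toric_ideal t"
  unfolding toric_ideal_def binom_def using assms
  by (auto simp: T_diff T_single intro!: PR_diff PR_single)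

lemma binom_I_props:
  assumes "g1 \<noteq> g2" "(binom g1 g2 :: 'k::comm_ring_1 epoly) \<in> toric_ideal t"
  shows "ky g1 \<subseteq> Et t \<and> ky g2 \<subseteq> Et t \<and> vimg g1 = vimg g2"
proof -
  have "ky g1 \<subseteq> Et t" "ky g2 \<subseteq> Et t" using assms keys_binom[OF assms(1), where 'k='k]
    by (auto simp: toric_ideal_def PR_def)
  moreover have "vimg g1 = vimg g2"
  proof (rule ccontr)
    assume ne: "vimg g1 \<noteq> vimg g2"
    have "toric_map (binom g1 g2 :: 'k epoly) = sg (vimg g1) 1 - sg (vimg g2) 1"
      by (simp add: binom_def T_diff T_single)
    then have "lk (toric_map (binom g1 g2 :: 'k epoly)) (vimg g1) = 1"
      using ne by (simp add: Poly_Mapping.lookup_minus lk_single)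
    moreover have "toric_map (binom g1 g2 :: 'k epoly) = 0" using assms(2) by (simp add: toric_ideal_def)
    ultimately show False by simp
  qed
  ultimately show ?thesis by blast
qed

lemma Gset_sub_I: "Gset t \<subseteq> (toric_ideal t :: 'k::comm_ring_1 epoly set)"
proof
  fix g assume "g \<in> (Gset t :: 'k epoly set)"
  then obtain h k where hk: "(h, k) \<in> Gpairs t" "g = binom h k" unfolding Gset_def by auto
  then show "g \<in> toric_ideal t" using Gpairs_props[OF hk(1)] binom_in_I by blast
qed

lemma I_sub_PR: "toric_ideal t \<subseteq> PR t" by (auto simp: toric_ideal_def)

lemma poly_expand: "(c :: 'k::comm_ring_1 epoly) = (\<Sum>m\<in>ky c. sg m (lk c m))"
  by (intro poly_mapping_eqI) (simp add: Poly_Mapping.lookup_sum lk_single in_keys_iff)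

lemma T_mult_single:
  "toric_map (c * sg h (1::'k::comm_ring_1)) = (\<Sum>m\<in>ky c. sg (vimg m + vimg h) (lk c m))"
proof -
  have "c * sg h 1 = (\<Sum>m\<in>ky c. sg m (lk c m)) * sg h 1" by (subst poly_expand) simp
  also have "\<dots> = (\<Sum>m\<in>ky c. sg (m + h) (lk c m))" by (simp add: sum_distrib_right mult_single)
  finally show ?thesis by (simp add: T_sum T_single V_add)
qed

lemma ig_sub_I: "ideal_gen (PR t) (Gset t) \<subseteq> (toric_ideal t :: 'k::comm_ring_1 epoly set)"
proof
  fix p :: "'k epoly" assume "p \<in> ideal_gen (PR t) (Gset t)"
  then obtain Fs c where 1: "finite Fs" "Fs \<subseteq> Gset t" "\<forall>g\<in>Fs. c g \<in> PR t" "p = (\<Sum>g\<in>Fs. c g * g)"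
    unfolding ideal_gen_def by blast
  have GP: "g \<in> PR t" if "g \<in> Fs" for g using that 1(2) Gset_sub_I I_sub_PR by blast
  have "p \<in> PR t" using 1 GP by (auto intro!: PR_sum PR_mult)
  moreover have "toric_map (c g * g) = 0" if "g \<in> Fs" for g
  proof -
    have "g \<in> Gset t" using that 1(2) by blast
    then obtain h k where hk: "(h, k) \<in> Gpairs t" "g = binom h k" unfolding Gset_def by auto
    have "vimg h = vimg k" using Gpairs_props[OF hk(1)] by blast
    then show ?thesis using hk(2) by (simp add: binom_def right_diff_distrib T_diff T_mult_single)
  qed
  then have "toric_map p = 0" using 1 by (simp add: T_sum)
  ultimately show "p \<in> toric_ideal t" by (simp add: toric_ideal_def)
qed

lemma Gset_sub_PR: "Gset t \<subseteq> (PR t :: 'k::comm_ring_1 epoly set)"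
  using Gset_sub_I I_sub_PR by blast

lemma Gpair_in_ig:
  assumes "(h, k) \<in> Gpairs t \<or> (k, h) \<in> Gpairs t"
  shows "(binom h k :: 'k::comm_ring_1 epoly) \<in> ideal_gen (PR t) (Gset t)"
  using assms
proof
  assume "(h, k) \<in> Gpairs t"
  then have "(binom h k :: 'k epoly) \<in> Gset t" unfolding Gset_def by force
  then show ?thesis using Gset_sub_PR by (intro ig_gen) auto
next
  assume "(k, h) \<in> Gpairs t"
  then have "(binom k h :: 'k epoly) \<in> Gset t" unfolding Gset_def by force
  then have "(binom k h :: 'k epoly) \<in> ideal_gen (PR t) (Gset t)" using Gset_sub_PR by (intro ig_gen) auto
  then have "- (binom k h :: 'k epoly) \<in> ideal_gen (PR t) (Gset t)" by (rule ig_uminus)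
  then show ?thesis by (simp add: binom_def)
qed

lemma Gpair_props2:
  assumes "(h, k) \<in> Gpairs t \<or> (k, h) \<in> Gpairs t"
  shows "ky h \<subseteq> Et t \<and> ky k \<subseteq> Et t \<and> vimg h = vimg k \<and> h \<noteq> k \<and> mdeg h \<ge> 1 \<and> mdeg k \<ge> 1"
  using assms Gpairs_props by metis

lemma binom_in_ig:
  "ky u \<subseteq> Et t \<Longrightarrow> ky v \<subseteq> Et t \<Longrightarrow> vimg u = vimg v \<Longrightarrow>
   (binom u v :: 'k::comm_ring_1 epoly) \<in> ideal_gen (PR t) (Gset t)"
proof (induction "mdeg u" arbitrary: u v rule: less_induct)
  case less
  show ?case
  proof (cases "u = v")
    case True
    then show ?thesis by (simp add: binom_def ig_0)
  next
    case False
    obtain h k where hk: "(h, k) \<in> Gpairs t \<or> (k, h) \<in> Gpairs t" "mdvd h u" "mdvd k v"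
      using comb[OF less.prems False] by blast
    note P = Gpair_props2[OF hk(1)]
    define r where "r = u - h"
    define r' where "r' = v - k"
    have u: "u = h + r" unfolding r_def by (rule mdvd_decomp[OF hk(2)])
    have v: "v = k + r'" unfolding r'_def by (rule mdvd_decomp[OF hk(3)])
    have "vimg h + vimg r = vimg k + vimg r'" using less.prems(3) u v V_add by metis
    then have vr: "vimg r = vimg r'" using P by simp
    have kr: "ky r \<subseteq> Et t" using mdvd_keys[OF mdvd_add_left[of r h]] less.prems(1) u by (simp add: add.commute)
    have kr': "ky r' \<subseteq> Et t" using mdvd_keys[OF mdvd_add_left[of r' k]] less.prems(2) v by (simp add: add.commute)
    have "mdeg u = mdeg h + mdeg r" using u mdeg_add by metis
    then have "mdeg r < mdeg u" using P by simp
    then have IH: "(binom r r' :: 'k epoly) \<in> ideal_gen (PR t) (Gset t)"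
      using less.hyps kr kr' vr by blast
    have eq: "(binom u v :: 'k epoly) = sg r 1 * binom h k + sg k 1 * binom r r'"
      unfolding binom_def using u v by (simp add: right_diff_distrib mult_single add.commute)
    have "sg r 1 * (binom h k :: 'k epoly) \<in> ideal_gen (PR t) (Gset t)"
      using kr Gpair_in_ig[OF hk(1)] by (intro ig_mult PR_single)
    moreover have "sg k 1 * (binom r r' :: 'k epoly) \<in> ideal_gen (PR t) (Gset t)"
      using P IH by (intro ig_mult PR_single) auto
    ultimately show ?thesis unfolding eq by (rule ig_add)
  qed
qed

lemma fiber:
  assumes "toric_map f = (0 :: 'k::comm_ring_1 vpoly)" "u \<in> ky f"
  shows "\<exists>v\<in>ky f. v \<noteq> u \<and> vimg v = vimg u"
proof (rule ccontr)
  assume "\<not> ?thesis"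
  then have c: "\<And>m. m \<in> ky f \<Longrightarrow> (vimg m = vimg u) = (m = u)" by blast
  have "0 = lk (toric_map f) (vimg u)" using assms by simp
  also have "\<dots> = (\<Sum>m\<in>ky f. if vimg m = vimg u then lk f m else 0)" by (rule T_lookup)
  also have "\<dots> = (\<Sum>m\<in>ky f. if m = u then lk f m else 0)" using c by (intro sum.cong) auto
  also have "\<dots> = lk f u" using assms(2) by simp
  finally show False using assms(2) by (simp add: in_keys_iff)
qed

lemma I_sub_ig: "toric_ideal t \<subseteq> (ideal_gen (PR t) (Gset t) :: 'k::comm_ring_1 epoly set)"
proof -
  have "\<forall>f :: 'k epoly. f \<in> toric_ideal t \<longrightarrow> card (ky f) = n \<longrightarrow> f \<in> ideal_gen (PR t) (Gset t)" for n
  proof (induction n rule: less_induct)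
    case (less n)
    show ?case
    proof (intro allI impI)
      fix f :: "'k epoly" assume fI: "f \<in> toric_ideal t" and cn: "card (ky f) = n"
      show "f \<in> ideal_gen (PR t) (Gset t)"
      proof (cases "f = 0")
        case True then show ?thesis by (simp add: ig_0)
      next
        case False
        then obtain u where u: "u \<in> ky f" by (metis all_not_in_conv keys_eq_empty)
        have fPR: "f \<in> PR t" and fT: "toric_map f = 0" using fI by (auto simp: toric_ideal_def)
        obtain v where v: "v \<in> ky f" "v \<noteq> u" "vimg v = vimg u" using fiber[OF fT u] by blast
        define c where "c = lk f u"
        define f' where "f' = f - (sg u c - sg v c)"
        have kf': "ky f' \<subseteq> ky f - {u}"
        proof
          fix x assume x: "x \<in> ky f'"
          show "x \<in> ky f - {u}"
          proof (cases "x = u")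
            case True then show ?thesis using x v(2) by (simp add: f'_def c_def in_keys_iff Poly_Mapping.lookup_minus lk_single)
          next
            case False then show ?thesis using x v(1) by (auto simp: f'_def in_keys_iff Poly_Mapping.lookup_minus lk_single split: if_splits)
          qed
        qed
        have "ky f' \<subset> ky f" using kf' u by blast
        then have "card (ky f') < card (ky f)" by (rule psubset_card_mono[rotated]) simp
        then have cf: "card (ky f') < n" using cn by simp
        have "f' \<in> toric_ideal t"
        proof -
          have "f' \<in> PR t" using kf' fPR by (intro PR_sub[of f' f]) auto
          moreover have "toric_map f' = 0" using fT v(3) by (simp add: f'_def T_diff T_single)
          ultimately show ?thesis by (simp add: toric_ideal_def)
        qed
        then have f'I: "f' \<in> ideal_gen (PR t) (Gset t)" using less.IH[OF cf, rule_format, of f'] by simp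
        have ku: "ky u \<subseteq> Et t" and kv: "ky v \<subseteq> Et t" using fPR u v(1) by (auto simp: PR_def)
        have m: "sg 0 c * (binom u v :: 'k epoly) \<in> ideal_gen (PR t) (Gset t)"
          using binom_in_ig[OF ku kv v(3)[symmetric]] by (intro ig_mult PR_single) auto
        have "f = f' + sg 0 c * binom u v"
          by (simp add: f'_def binom_def right_diff_distrib mult_single)
        then show ?thesis using ig_add[OF f'I m] by simp
      qed
    qed
  qed
  then show ?thesis by blast
qed



lemma mdeg_h1: "mdeg (h1 i j) = 2" by (simp add: h1_def mdeg_add)
lemma mdeg_hA: "mdeg (hA i j) = 5" by (simp add: hA_def mdeg_add)
lemma mdeg_kB: "mdeg (kB i j) = 5" by (simp add: kB_def mdeg_add)
lemma lk_hA_B: "lk (hA i j) (B q) = 0" by (simp add: hA_def Poly_Mapping.lookup_add lk_mv)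
lemma lk_hA_F2: "lk (hA i j) (F 2) = 0" by (simp add: hA_def Poly_Mapping.lookup_add lk_mv)
lemma lk_h1_B: "lk (h1 p q) (B q) = 1" by (simp add: h1_def Poly_Mapping.lookup_add lk_mv)
lemma lk_kB_F2: "lk (kB p q) (F 2) = 1" by (simp add: kB_def Poly_Mapping.lookup_add lk_mv)

lemma pair_shapes:
  assumes "(h, k) \<in> Gpairs t \<or> (k, h) \<in> Gpairs t"
  shows "(\<exists>p q. h = h1 p q \<and> k = h1 q p) \<or> (\<exists>p q. h = hA p q \<and> k = kB p q) \<or> (\<exists>p q. h = kB p q \<and> k = hA p q)"
  using assms
proof
  assume "(h, k) \<in> Gpairs t" then show ?thesis using Gpairs_cases by blast
next
  assume "(k, h) \<in> Gpairs t" then show ?thesis using Gpairs_cases[of k h t] by blast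
qed

lemma mdvd_lk: "mdvd a b \<Longrightarrow> lk a x \<le> lk b x" by (simp add: mdvd_def)

lemma G_minimal:
  assumes u: "(u1, u2) \<in> Gpairs t" and hk: "(h, k) \<in> Gpairs t \<or> (k, h) \<in> Gpairs t"
    and d1: "mdvd h u1" and d2: "mdvd k u2"
  shows "h = u1 \<and> k = u2"
  using Gpairs_cases[OF u]
proof (elim disjE exE conjE)
  fix i j assume U: "u1 = h1 i j" "u2 = h1 j i"
  show ?thesis using pair_shapes[OF hk]
  proof (elim disjE exE conjE)
    fix p q assume "h = h1 p q" "k = h1 q p"
    then show ?thesis using d1 d2 U by (intro conjI mdvd_eq_deg) (auto simp: mdeg_h1)
  next
    fix p q assume "h = hA p q"
    then show ?thesis using mdvd_deg_le[OF d1] U by (simp add: mdeg_h1 mdeg_hA)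
  next
    fix p q assume "h = kB p q"
    then show ?thesis using mdvd_deg_le[OF d1] U by (simp add: mdeg_h1 mdeg_kB)
  qed
next
  fix i j assume U: "u1 = hA i j" "u2 = kB i j"
  show ?thesis using pair_shapes[OF hk]
  proof (elim disjE exE conjE)
    fix p q assume "h = h1 p q"
    then show ?thesis using mdvd_lk[OF d1, of "B q"] U by (simp add: lk_h1_B lk_hA_B)
  next
    fix p q assume "h = hA p q" "k = kB p q"
    then show ?thesis using d1 d2 U by (intro conjI mdvd_eq_deg) (auto simp: mdeg_hA mdeg_kB)
  next
    fix p q assume "h = kB p q"
    then show ?thesis using mdvd_lk[OF d1, of "F 2"] U by (simp add: lk_kB_F2 lk_hA_F2)
  qed
qed

lemma prim:
  assumes u: "(u1, u2) \<in> Gpairs t"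
  shows "primitive t u1 u2 TYPE('k::comm_ring_1)"
proof -
  have I: "(binom u1 u2 :: 'k epoly) \<in> toric_ideal t" using Gpairs_props[OF u] by (intro binom_in_I) auto
  have "\<not> (\<exists>g1 g2. g1 \<noteq> g2 \<and> (binom g1 g2 :: 'k epoly) \<in> toric_ideal t
            \<and> (binom g1 g2 :: 'k epoly) \<noteq> binom u1 u2 \<and> mdvd g1 u1 \<and> mdvd g2 u2)"
  proof
    assume "\<exists>g1 g2. g1 \<noteq> g2 \<and> (binom g1 g2 :: 'k epoly) \<in> toric_ideal t
            \<and> (binom g1 g2 :: 'k epoly) \<noteq> binom u1 u2 \<and> mdvd g1 u1 \<and> mdvd g2 u2"
    then obtain g1 g2 where g: "g1 \<noteq> g2" "(binom g1 g2 :: 'k epoly) \<in> toric_ideal t"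
       "(binom g1 g2 :: 'k epoly) \<noteq> binom u1 u2" "mdvd g1 u1" "mdvd g2 u2" by blast
    note gp = binom_I_props[OF g(1,2)]
    obtain h k where hk: "(h, k) \<in> Gpairs t \<or> (k, h) \<in> Gpairs t" "mdvd h g1" "mdvd k g2"
      using comb[of g1 t g2] gp g(1) by blast
    have "h = u1 \<and> k = u2" using G_minimal[OF u hk(1) mdvd_trans[OF hk(2) g(4)] mdvd_trans[OF hk(3) g(5)]] .
    then have "g1 = u1" "g2 = u2" using hk(2,3) g(4,5) mdvd_antisym by auto
    then show False using g(3) by simp
  qed
  then show ?thesis using I unfolding primitive_def by blast
qed

lemma ex_max:
  assumes "finite K" "K \<noteq> {}" "\<forall>x y. le x y \<or> le y x" "\<forall>x y z. le x y \<and> le y z \<longrightarrow> le x z" "\<forall>x. le x x"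
  shows "\<exists>m\<in>K. \<forall>m'\<in>K. le m' m"
  using assms(1,2)
proof (induction K rule: finite_ne_induct)
  case (singleton x) then show ?case using assms(5) by auto
next
  case (insert x K)
  then obtain M where M: "M \<in> K" "\<forall>m'\<in>K. le m' M" by blast
  show ?case
  proof (cases "le x M")
    case True then show ?thesis using M by auto
  next
    case False
    then have "le M x" using assms(3) by blast
    then show ?thesis using M assms(4,5) by blast
  qed
qed

lemma lead_spec:
  assumes mo: "monomial_order le" and p: "p \<noteq> 0"
  shows "lead_mono le p \<in> ky p \<and> (\<forall>m'\<in>ky p. le m' (lead_mono le p))"
proof -
  have mo': "\<forall>x. le x x" "\<forall>x y. le x y \<and> le y x \<longrightarrow> x = y" "\<forall>x y z. le x y \<and> le y z \<longrightarrow> le x z"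
    "\<forall>x y. le x y \<or> le y x" using mo unfolding monomial_order_def by blast+
  have ne: "ky p \<noteq> {}" using p by simp
  obtain m where m: "m \<in> ky p" "\<forall>m'\<in>ky p. le m' m" using ex_max[OF finite_keys ne mo'(4,3,1)] by blast
  have "\<exists>!m. m \<in> ky p \<and> (\<forall>m'\<in>ky p. le m' m)"
  proof (rule ex1I[of _ m])
    show "m \<in> ky p \<and> (\<forall>m'\<in>ky p. le m' m)" using m by blast
  next
    fix m2 assume "m2 \<in> ky p \<and> (\<forall>m'\<in>ky p. le m' m2)"
    then show "m2 = m" using m mo'(2) by blast
  qed
  then have "lead_mono le p = m" unfolding lead_mono_def using m by (intro the1_equality) auto
  then show ?thesis using m by simp
qed

lemma GB:
  assumes mo: "monomial_order le"
  shows "groebner_basis le (Gset t :: 'k::comm_ring_1 epoly set) (toric_ideal t)"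
  unfolding groebner_basis_def
proof (intro conjI ballI impI)
  show "Gset t \<subseteq> (toric_ideal t :: 'k epoly set)" by (rule Gset_sub_I)
next
  fix f :: "'k epoly" assume fI: "f \<in> toric_ideal t" and f0: "f \<noteq> 0"
  have compat: "\<forall>x y z. le x y \<longrightarrow> le (x + z) (y + z)" and wfR: "wf {(x, y). le x y \<and> x \<noteq> y}"
    using mo unfolding monomial_order_def by blast+
  define u where "u = lead_mono le f"
  have u: "u \<in> ky f" "\<forall>m'\<in>ky f. le m' u" using lead_spec[OF mo f0] unfolding u_def by auto
  have fPR: "f \<in> PR t" and fT: "toric_map f = 0" using fI by (auto simp: toric_ideal_def)
  obtain v where v: "v \<in> ky f" "v \<noteq> u" "vimg v = vimg u" using fiber[OF fT u(1)] by blast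
  have ku: "ky u \<subseteq> Et t" and kv: "ky v \<subseteq> Et t" using fPR u(1) v(1) by (auto simp: PR_def)
  define Fib where "Fib = {m. ky m \<subseteq> Et t \<and> vimg m = vimg u}"
  have "u \<in> Fib" using ku by (simp add: Fib_def)
  obtain m where m: "m \<in> Fib" and mmin: "\<And>y. (y, m) \<in> {(x, y). le x y \<and> x \<noteq> y} \<Longrightarrow> y \<notin> Fib"
    by (rule wfE_min[OF wfR \<open>u \<in> Fib\<close>]) blast
  have km: "ky m \<subseteq> Et t" and vm: "vimg m = vimg u" using m by (auto simp: Fib_def)
  have "m \<noteq> u"
  proof
    assume "m = u"
    have "v \<in> Fib" using kv v(3) by (simp add: Fib_def)
    moreover have "le v u" using u(2) v(1) by blast
    ultimately show False using mmin[of v] v(2) \<open>m = u\<close> by simp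
  qed
  obtain h k where hk: "(h, k) \<in> Gpairs t \<or> (k, h) \<in> Gpairs t" "mdvd h u" "mdvd k m"
    using comb[OF ku km vm[symmetric] \<open>m \<noteq> u\<close>[symmetric]] by blast
  note P = Gpair_props2[OF hk(1)]
  obtain g where g: "g \<in> (Gset t :: 'k epoly set)" "ky g = {h, k}"
  proof (cases "(h, k) \<in> Gpairs t")
    case True
    then have "(binom h k :: 'k epoly) \<in> Gset t" unfolding Gset_def by force
    moreover have "ky (binom h k :: 'k epoly) = {h, k}" using P keys_binom by blast
    ultimately show ?thesis using that by blast
  next
    case False
    then have "(k, h) \<in> Gpairs t" using hk(1) by blast
    then have "(binom k h :: 'k epoly) \<in> Gset t" unfolding Gset_def by force
    moreover have "ky (binom k h :: 'k epoly) = {h, k}" using P keys_binom[of k h] by auto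
    ultimately show ?thesis using that by blast
  qed
  have g0: "g \<noteq> 0"
  proof
    assume "g = 0" then have "ky g = {}" by simp
    then show False using g(2) by simp
  qed
  have LS: "lead_mono le g \<in> ky g" "\<forall>m'\<in>ky g. le m' (lead_mono le g)"
    using lead_spec[OF mo g0] by blast+
  have L: "lead_mono le g \<in> {h, k}" "le h (lead_mono le g)" "le k (lead_mono le g)"
    using LS g(2) by simp_all
  show "\<exists>g\<in>(Gset t :: 'k epoly set). g \<noteq> 0 \<and> mdvd (lead_mono le g) (lead_mono le f)"
  proof (cases "lead_mono le g = h")
    case True
    then have "mdvd (lead_mono le g) (lead_mono le f)" using hk(2) u_def by simp
    then show ?thesis using g(1) g0 by (intro bexI[of _ g] conjI)
  next
    case False
    then have lk_: "lead_mono le g = k" using L(1) by simp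
    then have hk_le: "le h k" using L(2) by simp
    define r where "r = m - k"
    have mr: "m = k + r" unfolding r_def by (rule mdvd_decomp[OF hk(3)])
    define m' where "m' = h + r"
    have le': "le m' m" unfolding m'_def mr by (rule compat[rule_format, OF hk_le])
    have hk_ne: "h \<noteq> k" using P by blast
    have "m' \<noteq> m" unfolding m'_def mr using hk_ne by simp
    moreover have "m' \<in> Fib"
    proof -
      have "ky r \<subseteq> ky m" using mdvd_keys[OF mdvd_add_left[of r k]] mr by (simp add: add.commute)
      then have kr: "ky r \<subseteq> Et t" using km by blast
      have kh: "ky h \<subseteq> Et t" using P by blast
      have "ky m' \<subseteq> Et t" unfolding m'_def using keys_add_sub[OF kh kr] .
      moreover have "vimg m' = vimg m"
      proof -
        have "vimg h = vimg k" using P by blast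
        then show ?thesis unfolding m'_def mr V_add by simp
      qed
      ultimately show ?thesis using vm unfolding Fib_def by simp
    qed
    moreover have "(m', m) \<in> {(x, y). le x y \<and> x \<noteq> y}" using le' \<open>m' \<noteq> m\<close> by simp
    ultimately have False using mmin by blast
    then show ?thesis by (rule FalseE)
  qed
qed


theorem theorem3p3:
  fixes t :: nat
  assumes "t \<ge> 2"
    and alg_closed: "\<forall>p :: 'k :: field_char_0 poly. degree p \<ge> 1 \<longrightarrow> (\<exists>x. poly p x = 0)"
  shows "(\<forall>(u1, u2) \<in> Gpairs t. primitive t u1 u2 TYPE('k))
     \<and> toric_ideal t = ideal_gen (PR t) (Gset t :: 'k epoly set)
     \<and> universal_groebner_basis (Gset t :: 'k epoly set) (toric_ideal t)"
proof -
  have 1: "\<forall>(u1, u2) \<in> Gpairs t. primitive t u1 u2 TYPE('k)"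
  proof (intro ballI)
    fix x assume "x \<in> Gpairs t"
    then show "case x of (u1, u2) \<Rightarrow> primitive t u1 u2 TYPE('k)"
      by (cases x) (simp add: prim)
  qed
  have 2: "toric_ideal t = ideal_gen (PR t) (Gset t :: 'k epoly set)"
    using I_sub_ig[where 'k='k and t=t] ig_sub_I[where 'k='k and t=t] by (rule subset_antisym)
  have 3: "universal_groebner_basis (Gset t :: 'k epoly set) (toric_ideal t)"
    unfolding universal_groebner_basis_def using GB by blast
  show ?thesis using 1 2 3 by blast
qed

end
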